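(* Let $X$ be a set of variables, $\mathbb{K}$ a field, $<$ an admissible (monomial) order on the set $[X]$ of monomials, and $I$ an ideal of $\mathbb{K}[X]$. Let $R=\{f_1,\dots,f_n\}$ be a finite set of nonzero polynomials generating $I$. Then $R$ is a Gröbner basis of $I$ (with respect to $<$) if and only if the set $F_R=\{T_1,\dots,T_n\}$ of reduction operators associated to $R$ is confluent.
   Context: A reduction operator relative to $([X],<)$ is an idempotent linear endomorphism $T$ of $\mathbb{K}[X]$ such that for every monomial $m$, either $T(m)=m$ or $T(m)$ is a linear combination of monomials strictly smaller than $m$. For every subspace $V$ of $\mathbb{K}[X]$ there is a unique reduction operator with kernel $V$. $F_R=\{T_1,\dots,T_n\}$ where $T_i$ is the reduction operator whose kernel is the ideal of $\mathbb{K}[X]$ generated by $f_i$. For a reduction operator $T$, $\mathrm{nf}(T)=\{m\in[X]\mid T(m)=m\}$. For a set $F$ of reduction operators, $\wedge F$ is the reduction operator whose kernel is $\sum_{T\in F}\ker T$, and $F$ is confluent if $\bigcap_{T\in F}\mathrm{nf}(T)=\mathrm{nf}(\wedge F)$. *)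

theory Defs
  imports "HOL-Library.Poly_Mapping"
begin

text \<open>Monomials over the variable type x are
  finitely supported maps from variables to nat; polynomials over the field 'k are finitely supported
  coefficient functions on monomials, with the convolution product of Poly_Mapping.\<close>

type_synonym 'x monom = "'x \<Rightarrow>\<^sub>0 nat"
type_synonym ('x, 'k) mpoly = "('x \<Rightarrow>\<^sub>0 nat) \<Rightarrow>\<^sub>0 'k"

definition mono :: "'x monom \<Rightarrow> ('x, 'k::zero_neq_one) mpoly" where
  "mono m = Poly_Mapping.single m 1"

definition scal :: "'k::comm_ring_1 \<Rightarrow> ('x, 'k) mpoly \<Rightarrow> ('x, 'k) mpoly" where
  "scal c p = Poly_Mapping.single 0 c * p"

definition admissible_order :: "('x monom \<Rightarrow> 'x monom \<Rightarrow> bool) \<Rightarrow> bool" where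
  "admissible_order lt \<longleftrightarrow>
     (\<forall>m. \<not> lt m m) \<and>
     (\<forall>a b c. lt a b \<longrightarrow> lt b c \<longrightarrow> lt a c) \<and>
     (\<forall>a b. a = b \<or> lt a b \<or> lt b a) \<and>
     wfP lt \<and>
     (\<forall>m. m \<noteq> 0 \<longrightarrow> lt 0 m) \<and>
     (\<forall>a b c. lt a b \<longrightarrow> lt (a + c) (b + c))"

definition lm :: "('x monom \<Rightarrow> 'x monom \<Rightarrow> bool) \<Rightarrow> ('x, 'k::zero) mpoly \<Rightarrow> 'x monom" where
  "lm lt p = (THE m. m \<in> Poly_Mapping.keys p \<and> (\<forall>m'\<in>Poly_Mapping.keys p. m' \<noteq> m \<longrightarrow> lt m' m))"

definition mdvd :: "'x monom \<Rightarrow> 'x monom \<Rightarrow> bool" where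
  "mdvd a b \<longleftrightarrow> (\<exists>t. b = a + t)"

definition ideal_gen :: "('x, 'k::comm_ring_1) mpoly set \<Rightarrow> ('x, 'k) mpoly set" where
  "ideal_gen S = {p. \<exists>A q. finite A \<and> A \<subseteq> S \<and> p = (\<Sum>g\<in>A. q g * g)}"

definition is_ideal :: "('x, 'k::comm_ring_1) mpoly set \<Rightarrow> bool" where
  "is_ideal I \<longleftrightarrow> 0 \<in> I \<and> (\<forall>p\<in>I. \<forall>q\<in>I. p + q \<in> I) \<and> (\<forall>p\<in>I. \<forall>r. r * p \<in> I)"

definition groebner_basis ::
  "('x monom \<Rightarrow> 'x monom \<Rightarrow> bool) \<Rightarrow> ('x, 'k::comm_ring_1) mpoly set \<Rightarrow> ('x, 'k) mpoly set \<Rightarrow> bool" where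
  "groebner_basis lt G I \<longleftrightarrow> G \<subseteq> I \<and>
     (\<forall>f\<in>I. f \<noteq> 0 \<longrightarrow> (\<exists>g\<in>G. g \<noteq> 0 \<and> mdvd (lm lt g) (lm lt f)))"

definition reduction_op ::
  "('x monom \<Rightarrow> 'x monom \<Rightarrow> bool) \<Rightarrow> (('x, 'k::field) mpoly \<Rightarrow> ('x, 'k) mpoly) \<Rightarrow> bool" where
  "reduction_op lt T \<longleftrightarrow>
     (\<forall>p q. T (p + q) = T p + T q) \<and>
     (\<forall>c p. T (scal c p) = scal c (T p)) \<and>
     (\<forall>p. T (T p) = T p) \<and>
     (\<forall>m. T (mono m) = mono m \<or> (\<forall>m'\<in>Poly_Mapping.keys (T (mono m)). lt m' m))"

definition ker :: "(('x, 'k::zero) mpoly \<Rightarrow> ('x, 'k) mpoly) \<Rightarrow> ('x, 'k) mpoly set" where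
  "ker T = {p. T p = 0}"

definition red_op_of ::
  "('x monom \<Rightarrow> 'x monom \<Rightarrow> bool) \<Rightarrow> ('x, 'k::field) mpoly set \<Rightarrow> (('x, 'k) mpoly \<Rightarrow> ('x, 'k) mpoly)" where
  "red_op_of lt V = (THE T. reduction_op lt T \<and> ker T = V)"

definition nf :: "(('x, 'k::zero_neq_one) mpoly \<Rightarrow> ('x, 'k) mpoly) \<Rightarrow> 'x monom set" where
  "nf T = {m. T (mono m) = mono m}"

definition sum_kernels ::
  "(('x, 'k::field) mpoly \<Rightarrow> ('x, 'k) mpoly) set \<Rightarrow> ('x, 'k) mpoly set" where
  "sum_kernels F = {p. \<exists>v. (\<forall>T\<in>F. v T \<in> ker T) \<and> p = (\<Sum>T\<in>F. v T)}"

definition wedge ::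
  "('x monom \<Rightarrow> 'x monom \<Rightarrow> bool) \<Rightarrow> (('x, 'k::field) mpoly \<Rightarrow> ('x, 'k) mpoly) set
     \<Rightarrow> (('x, 'k) mpoly \<Rightarrow> ('x, 'k) mpoly)" where
  "wedge lt F = red_op_of lt (sum_kernels F)"

definition confluent ::
  "('x monom \<Rightarrow> 'x monom \<Rightarrow> bool) \<Rightarrow> (('x, 'k::field) mpoly \<Rightarrow> ('x, 'k) mpoly) set \<Rightarrow> bool" where
  "confluent lt F \<longleftrightarrow> (\<Inter>T\<in>F. nf T) = nf (wedge lt F)"

definition F_R ::
  "('x monom \<Rightarrow> 'x monom \<Rightarrow> bool) \<Rightarrow> ('x, 'k::field) mpoly set \<Rightarrow> (('x, 'k) mpoly \<Rightarrow> ('x, 'k) mpoly) set" where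
  "F_R lt R = (\<lambda>f. red_op_of lt (ideal_gen {f})) ` R"

end

theory Submission imports Defs begin

lemma adm: assumes "admissible_order lt"
  shows adm_irrefl: "\<not> lt m m" and adm_trans: "lt a b \<Longrightarrow> lt b c \<Longrightarrow> lt a c"
    and adm_total: "a = b \<or> lt a b \<or> lt b a" and adm_wf: "wfP lt"
    and adm_mono: "lt a b \<Longrightarrow> lt (a + c) (b + c)"
  using assms unfolding admissible_order_def by blast+

lemma adm_mono2: assumes "admissible_order lt" "lt a b" shows "lt (c + a) (c + b)"
  using adm_mono[OF assms, of c] by (simp add: add.commute)

lemma finite_max:
  assumes "admissible_order lt" "finite S" "S \<noteq> {}"
  shows "\<exists>m\<in>S. \<forall>k\<in>S. k = m \<or> lt k m"
  using assms(2,3)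
proof (induction S rule: finite_ne_induct)
  case (singleton x) then show ?case by auto
next
  case (insert x F)
  then obtain m where m: "m \<in> F" "\<forall>k\<in>F. k = m \<or> lt k m" by auto
  show ?case
  proof (cases "lt m x")
    case True
    then show ?thesis using m adm_trans[OF assms(1)] by auto
  next
    case False
    then have "x = m \<or> lt x m" using adm_total[OF assms(1), of x m] by auto
    then show ?thesis using m by auto
  qed
qed

lemma lm_prop:
  assumes "admissible_order lt" "p \<noteq> 0"
  shows "lm lt p \<in> Poly_Mapping.keys p" "\<And>k. k \<in> Poly_Mapping.keys p \<Longrightarrow> k \<noteq> lm lt p \<Longrightarrow> lt k (lm lt p)"
proof -
  have "Poly_Mapping.keys p \<noteq> {}" using assms(2) keys_eq_empty by metis
  then obtain m where m: "m \<in> Poly_Mapping.keys p" "\<forall>k\<in>Poly_Mapping.keys p. k = m \<or> lt k m"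
    using finite_max[OF assms(1) finite_keys \<open>Poly_Mapping.keys p \<noteq> {}\<close>] by blast
  have "lm lt p = m" unfolding lm_def
  proof (rule the_equality)
    show "m \<in> Poly_Mapping.keys p \<and> (\<forall>m'\<in>Poly_Mapping.keys p. m' \<noteq> m \<longrightarrow> lt m' m)" using m by auto
  next
    fix m' assume "m' \<in> Poly_Mapping.keys p \<and> (\<forall>m''\<in>Poly_Mapping.keys p. m'' \<noteq> m' \<longrightarrow> lt m'' m')"
    then have "m' \<in> Poly_Mapping.keys p" "m \<noteq> m' \<Longrightarrow> lt m m'" using m(1) by auto
    then show "m' = m" using m(2) adm_trans[OF assms(1), of m m' m] adm_irrefl[OF assms(1), of m] by blast
  qed
  then show "lm lt p \<in> Poly_Mapping.keys p" "\<And>k. k \<in> Poly_Mapping.keys p \<Longrightarrow> k \<noteq> lm lt p \<Longrightarrow> lt k (lm lt p)"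
    using m by auto
qed

lemma lm_eqI:
  assumes "admissible_order lt" "m \<in> Poly_Mapping.keys p" "\<And>k. k \<in> Poly_Mapping.keys p \<Longrightarrow> k \<noteq> m \<Longrightarrow> lt k m"
  shows "lm lt p = m"
proof -
  have "p \<noteq> 0" using assms(2) by auto
  from lm_prop[OF assms(1) this] show ?thesis using assms adm_trans[OF assms(1)] adm_irrefl[OF assms(1)]
    by blast
qed

lemma scal_single: "scal c (mono k) = Poly_Mapping.single k c"
  unfolding scal_def mono_def by (simp add: mult_single)

lemma lookup_scal: "Poly_Mapping.lookup (scal c p) m = c * Poly_Mapping.lookup p m"
proof -
  have "scal c p = Poly_Mapping.map ((*) c) p" unfolding scal_def by (simp add: mult_map_scale_conv_mult)
  then show ?thesis by (simp add: Poly_Mapping.map.rep_eq when_def)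
qed

lemma keys_scal: "Poly_Mapping.keys (scal c p) \<subseteq> Poly_Mapping.keys p"
  by (auto simp: in_keys_iff lookup_scal)

lemma scal_minus1: "scal (-1) p = - p"
  unfolding scal_def by (simp add: single_uminus)

lemma scal_add: "scal c (p + q) = scal c p + scal c q"
  unfolding scal_def by (simp add: distrib_left)

lemma scal_diff: "scal c (p - q) = scal c p - scal c q"
  unfolding scal_def by (simp add: right_diff_distrib)

lemma poly_sum_rep: "p = (\<Sum>k\<in>Poly_Mapping.keys p. scal (Poly_Mapping.lookup p k) (mono k))"
proof (rule poly_mapping_eqI)
  fix m
  have "Poly_Mapping.lookup (\<Sum>k\<in>Poly_Mapping.keys p. scal (Poly_Mapping.lookup p k) (mono k)) m = (\<Sum>k\<in>Poly_Mapping.keys p. (if k = m then Poly_Mapping.lookup p k else 0))"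
    unfolding lookup_sum by (simp add: scal_single lookup_single when_def eq_commute)
  also have "\<dots> = Poly_Mapping.lookup p m" by (simp add: in_keys_iff)
  finally show "Poly_Mapping.lookup p m = Poly_Mapping.lookup (\<Sum>k\<in>Poly_Mapping.keys p. scal (Poly_Mapping.lookup p k) (mono k)) m" by simp
qed


definition subsp :: "('x, 'k::field) mpoly set \<Rightarrow> bool" where
  "subsp V \<longleftrightarrow> 0 \<in> V \<and> (\<forall>p\<in>V. \<forall>q\<in>V. p + q \<in> V) \<and> (\<forall>c. \<forall>p\<in>V. scal c p \<in> V)"

definition LMs :: "('x monom \<Rightarrow> 'x monom \<Rightarrow> bool) \<Rightarrow> ('x, 'k::zero) mpoly set \<Rightarrow> 'x monom set" where
  "LMs lt V = {m. \<exists>v\<in>V. v \<noteq> 0 \<and> lm lt v = m}"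

lemma subsp_0: "subsp V \<Longrightarrow> 0 \<in> V" unfolding subsp_def by blast
lemma subsp_add: "subsp V \<Longrightarrow> p \<in> V \<Longrightarrow> q \<in> V \<Longrightarrow> p + q \<in> V" unfolding subsp_def by blast
lemma subsp_scal: "subsp V \<Longrightarrow> p \<in> V \<Longrightarrow> scal c p \<in> V" unfolding subsp_def by blast
lemma subsp_diff: assumes "subsp V" "p \<in> V" "q \<in> V" shows "p - q \<in> V"
proof -
  have "p - q = p + scal (-1) q" by (simp add: scal_minus1)
  then show ?thesis using assms subsp_add subsp_scal by metis
qed

lemma red_add: "reduction_op lt T \<Longrightarrow> T (p + q) = T p + T q"
  unfolding reduction_op_def by blast
lemma red_scal: "reduction_op lt T \<Longrightarrow> T (scal c p) = scal c (T p)"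
  unfolding reduction_op_def by blast
lemma red_idem: "reduction_op lt T \<Longrightarrow> T (T p) = T p"
  unfolding reduction_op_def by blast
lemma red_mono: "reduction_op lt T \<Longrightarrow> T (mono m) \<noteq> mono m \<Longrightarrow> k \<in> Poly_Mapping.keys (T (mono m)) \<Longrightarrow> lt k m"
  unfolding reduction_op_def by blast
lemma red_zero: assumes "reduction_op lt T" shows "T 0 = 0"
proof -
  have "T 0 = T 0 + T 0" using red_add[OF assms, of 0 0] by simp
  then show ?thesis by simp
qed
lemma red_diff: assumes "reduction_op lt T" shows "T (p - q) = T p - T q"
proof -
  have "T p = T (p - q) + T q" using red_add[OF assms, of "p - q" q] by simp
  then show ?thesis by simp
qed
lemma red_sum: assumes "reduction_op lt T" shows "T (\<Sum>k\<in>A. f k) = (\<Sum>k\<in>A. T (f k))"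
proof (cases "finite A")
  case True
  then show ?thesis by (induction A rule: finite_induct) (simp_all add: red_zero[OF assms] red_add[OF assms])
next
  case False
  then show ?thesis by (simp add: red_zero[OF assms])
qed

lemma lookup_mono: "Poly_Mapping.lookup (mono k) m = (if k = m then 1 else 0)"
  unfolding mono_def by (simp add: lookup_single when_def)

lemma keyK:
  assumes adm: "admissible_order lt" and T: "reduction_op lt T"
    and cond: "\<And>k. k \<in> Poly_Mapping.keys q \<Longrightarrow> k \<notin> nf T \<Longrightarrow> k = m \<or> lt k m"
  shows "Poly_Mapping.lookup (T q) m = (if m \<in> nf T then Poly_Mapping.lookup q m else 0)"
proof -
  have "T q = T (\<Sum>k\<in>Poly_Mapping.keys q. scal (Poly_Mapping.lookup q k) (mono k))"
    using poly_sum_rep[of q] by simp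
  also have "\<dots> = (\<Sum>k\<in>Poly_Mapping.keys q. scal (Poly_Mapping.lookup q k) (T (mono k)))"
    by (simp add: red_sum[OF T] red_scal[OF T])
  finally have "Poly_Mapping.lookup (T q) m =
      (\<Sum>k\<in>Poly_Mapping.keys q. Poly_Mapping.lookup q k * Poly_Mapping.lookup (T (mono k)) m)"
    by (simp add: lookup_sum lookup_scal)
  also have "\<dots> = (\<Sum>k\<in>Poly_Mapping.keys q. (if k = m then (if m \<in> nf T then Poly_Mapping.lookup q k else 0) else 0))"
  proof (rule sum.cong)
    fix k assume k: "k \<in> Poly_Mapping.keys q"
    show "Poly_Mapping.lookup q k * Poly_Mapping.lookup (T (mono k)) m =
        (if k = m then (if m \<in> nf T then Poly_Mapping.lookup q k else 0) else 0)"
    proof (cases "k \<in> nf T")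
      case True
      then show ?thesis by (auto simp: nf_def lookup_mono)
    next
      case False
      have "Poly_Mapping.lookup (T (mono k)) m = 0"
      proof (rule ccontr)
        assume "Poly_Mapping.lookup (T (mono k)) m \<noteq> 0"
        then have "lt m k" using red_mono[OF T, of k m] False by (auto simp: nf_def in_keys_iff)
        then show False using cond[OF k False] adm_irrefl[OF adm] adm_trans[OF adm] by blast
      qed
      then show ?thesis using False by auto
    qed
  qed simp
  also have "\<dots> = (if m \<in> nf T then Poly_Mapping.lookup q m else 0)"
    by (simp add: sum.delta' in_keys_iff)
  finally show ?thesis .
qed

lemma keys_T_nf:
  assumes adm: "admissible_order lt" and T: "reduction_op lt T"
  shows "Poly_Mapping.keys (T p) \<subseteq> nf T"
proof (rule ccontr)
  let ?q = "T p"
  assume "\<not> ?thesis"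
  then have ne: "Poly_Mapping.keys ?q - nf T \<noteq> {}" by blast
  obtain m where m: "m \<in> Poly_Mapping.keys ?q - nf T" "\<forall>k\<in>Poly_Mapping.keys ?q - nf T. k = m \<or> lt k m"
    using finite_max[OF adm finite_Diff[OF finite_keys] ne] by blast
  have "Poly_Mapping.lookup (T ?q) m = 0"
    using keyK[OF adm T, of ?q m] m by auto
  moreover have "T ?q = ?q" by (rule red_idem[OF T])
  ultimately show False using m by (simp add: in_keys_iff)
qed

lemma nf_char:
  assumes adm: "admissible_order lt" and T: "reduction_op lt T"
  shows "nf T = - LMs lt (ker T)"
proof (intro set_eqI iffI)
  fix m assume m: "m \<in> nf T"
  show "m \<in> - LMs lt (ker T)"
  proof
    assume "m \<in> LMs lt (ker T)"
    then obtain v where v: "T v = 0" "v \<noteq> 0" "lm lt v = m" by (auto simp: LMs_def ker_def)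
    have "Poly_Mapping.lookup (T v) m = Poly_Mapping.lookup v m"
      using keyK[OF adm T, of v m] lm_prop[OF adm v(2)] v(3) m by auto
    then show False using v lm_prop[OF adm v(2)] by (simp add: in_keys_iff)
  qed
next
  fix m assume m: "m \<in> - LMs lt (ker T)"
  show "m \<in> nf T"
  proof (rule ccontr)
    assume nm: "m \<notin> nf T"
    let ?v = "mono m - T (mono m)"
    have Tv: "T ?v = 0" by (simp add: red_diff[OF T] red_idem[OF T])
    have lt_keys: "\<And>k. k \<in> Poly_Mapping.keys (T (mono m)) \<Longrightarrow> lt k m"
      using red_mono[OF T] nm by (auto simp: nf_def)
    have "m \<notin> Poly_Mapping.keys (T (mono m))" using lt_keys adm_irrefl[OF adm] by blast
    then have "Poly_Mapping.lookup ?v m = 1" by (simp add: lookup_minus lookup_mono in_keys_iff)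
    then have mk: "m \<in> Poly_Mapping.keys ?v" by (simp add: in_keys_iff)
    have "lm lt ?v = m"
    proof (rule lm_eqI[OF adm mk])
      fix k assume "k \<in> Poly_Mapping.keys ?v" "k \<noteq> m"
      then have "k \<in> Poly_Mapping.keys (T (mono m))"
        using keys_diff[of "mono m" "T (mono m)"] by (auto simp: mono_def)
      then show "lt k m" by (rule lt_keys)
    qed
    moreover have "?v \<noteq> 0" using mk by auto
    ultimately have "m \<in> LMs lt (ker T)" using Tv by (auto simp: LMs_def ker_def)
    then show False using m by blast
  qed
qed

definition Dec :: "('x monom \<Rightarrow> 'x monom \<Rightarrow> bool) \<Rightarrow> ('x, 'k::field) mpoly set \<Rightarrow> ('x, 'k) mpoly \<Rightarrow> ('x, 'k) mpoly \<Rightarrow> bool" where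
  "Dec lt V p r \<longleftrightarrow> p - r \<in> V \<and> Poly_Mapping.keys r \<subseteq> - LMs lt V"

lemma Dec_unique:
  assumes adm: "admissible_order lt" and V: "subsp V" and d1: "Dec lt V p r" and d2: "Dec lt V p r'"
  shows "r = r'"
proof (rule ccontr)
  assume ne: "r \<noteq> r'"
  let ?w = "r - r'"
  have "?w = (p - r') - (p - r)" by simp
  then have wV: "?w \<in> V" using subsp_diff[OF V] d1 d2 unfolding Dec_def by metis
  have w0: "?w \<noteq> 0" using ne by simp
  have "lm lt ?w \<in> Poly_Mapping.keys ?w" using lm_prop[OF adm w0] by blast
  then have "lm lt ?w \<in> - LMs lt V" using keys_diff[of r r'] d1 d2 unfolding Dec_def by blast
  moreover have "lm lt ?w \<in> LMs lt V" unfolding LMs_def using wV w0 by blast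
  ultimately show False by blast
qed

lemma red_Dec:
  assumes adm: "admissible_order lt" and T: "reduction_op lt T"
  shows "Dec lt (ker T) p (T p)"
  unfolding Dec_def
proof
  show "p - T p \<in> ker T" by (simp add: ker_def red_diff[OF T] red_idem[OF T])
  show "Poly_Mapping.keys (T p) \<subseteq> - LMs lt (ker T)"
    using keys_T_nf[OF adm T] nf_char[OF adm T] by blast
qed

lemma red_unique:
  assumes adm: "admissible_order lt" and V: "subsp V"
    and T1: "reduction_op lt T1" "ker T1 = V" and T2: "reduction_op lt T2" "ker T2 = V"
  shows "T1 = T2"
proof
  fix p show "T1 p = T2 p"
    using Dec_unique[OF adm V] red_Dec[OF adm T1(1), of p] red_Dec[OF adm T2(1), of p] T1(2) T2(2) by metis
qed


lemma Dec_exists: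
  fixes V :: "('x, 'k::field) mpoly set"
  assumes adm: "admissible_order lt" and V: "subsp V"
  shows "\<exists>r. Dec lt V p r"
proof -
  have main: "\<forall>p::('x, 'k) mpoly. (\<forall>k\<in>Poly_Mapping.keys p. k = M \<or> lt k M) \<longrightarrow> (\<exists>r. Dec lt V p r)" for M
    using adm_wf[OF adm]
  proof (induction M rule: wfp_induct_rule)
    case (less M)
    have H: "\<exists>r. Dec lt V q r" if q: "\<forall>k\<in>Poly_Mapping.keys q. lt k M" for q
    proof (cases "q = 0")
      case True
      then have "Dec lt V q 0" using subsp_0[OF V] by (simp add: Dec_def)
      then show ?thesis by blast
    next
      case False
      have "lt (lm lt q) M" using q lm_prop[OF adm False] by blast
      moreover have "\<forall>k\<in>Poly_Mapping.keys q. k = lm lt q \<or> lt k (lm lt q)" using lm_prop[OF adm False] by blast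
      ultimately show ?thesis using less.IH by blast
    qed
    show ?case
    proof (intro allI impI)
      fix p :: "('x, 'k) mpoly" assume p: "\<forall>k\<in>Poly_Mapping.keys p. k = M \<or> lt k M"
      define c where "c = Poly_Mapping.lookup p M"
      define p' where "p' = p - Poly_Mapping.single M c"
      have "\<forall>k\<in>Poly_Mapping.keys p'. lt k M"
      proof
        fix k assume k: "k \<in> Poly_Mapping.keys p'"
        then have "Poly_Mapping.lookup p k - (c when M = k) \<noteq> 0"
          by (simp add: p'_def lookup_minus lookup_single in_keys_iff)
        then have "k \<noteq> M" "k \<in> Poly_Mapping.keys p" by (auto simp: c_def when_def in_keys_iff split: if_splits)
        then show "lt k M" using p by blast
      qed
      then obtain r' where r': "Dec lt V p' r'" using H by blast
      show "\<exists>r. Dec lt V p r"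
      proof (cases "M \<in> LMs lt V")
        case False
        have "Dec lt V p (r' + Poly_Mapping.single M c)"
          unfolding Dec_def
        proof
          have e: "p - (r' + Poly_Mapping.single M c) = p' - r'" by (simp add: p'_def)
          show "p - (r' + Poly_Mapping.single M c) \<in> V" unfolding e using r' by (simp add: Dec_def)
          show "Poly_Mapping.keys (r' + Poly_Mapping.single M c) \<subseteq> - LMs lt V"
            using keys_add[of r' "Poly_Mapping.single M c"] r' False by (auto simp: Dec_def split: if_splits)
        qed
        then show ?thesis by blast
      next
        case True
        then obtain v where v: "v \<in> V" "v \<noteq> 0" "lm lt v = M" by (auto simp: LMs_def)
        define d where "d = Poly_Mapping.lookup v M"
        have d0: "d \<noteq> 0" using lm_prop[OF adm v(2)] v(3) by (simp add: d_def in_keys_iff)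
        define w where "w = scal (c / d) v"
        have wV: "w \<in> V" using subsp_scal[OF V v(1)] by (simp add: w_def)
        define p'' where "p'' = p - w"
        have "\<forall>k\<in>Poly_Mapping.keys p''. lt k M"
        proof
          fix k assume k: "k \<in> Poly_Mapping.keys p''"
          then have nz: "Poly_Mapping.lookup p k - (c / d) * Poly_Mapping.lookup v k \<noteq> 0"
            by (simp add: p''_def w_def lookup_minus lookup_scal in_keys_iff)
          have "k \<noteq> M"
          proof
            assume "k = M" then show False using nz d0 by (simp add: c_def d_def)
          qed
          moreover have "k \<in> Poly_Mapping.keys p \<or> k \<in> Poly_Mapping.keys v"
            using nz by (auto simp: in_keys_iff)
          ultimately show "lt k M" using p lm_prop[OF adm v(2)] v(3) by blast
        qed
        then obtain r'' where r'': "Dec lt V p'' r''" using H by blast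
        have "Dec lt V p r''"
          unfolding Dec_def
        proof
          have e: "p - r'' = (p'' - r'') + w" by (simp add: p''_def)
          show "p - r'' \<in> V" unfolding e using r'' wV subsp_add[OF V] by (simp add: Dec_def)
          show "Poly_Mapping.keys r'' \<subseteq> - LMs lt V" using r'' by (simp add: Dec_def)
        qed
        then show ?thesis by blast
      qed
    qed
  qed
  show ?thesis
  proof (cases "p = 0")
    case True
    then have "Dec lt V p 0" using subsp_0[OF V] by (simp add: Dec_def)
    then show ?thesis by blast
  next
    case False
    then show ?thesis using main[of "lm lt p"] lm_prop[OF adm False] by blast
  qed
qed

lemma red_exists:
  assumes adm: "admissible_order lt" and V: "subsp V"
  shows "\<exists>T. reduction_op lt T \<and> ker T = V"
proof -
  define T where "T p = (THE r. Dec lt V p r)" for p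
  have TD: "Dec lt V p (T p)" for p
    unfolding T_def using Dec_exists[OF adm V, of p] Dec_unique[OF adm V] by (metis theI)
  have Teq: "T p = r" if "Dec lt V p r" for p r
    using Dec_unique[OF adm V TD that] .
  have "reduction_op lt T"
    unfolding reduction_op_def
  proof (intro conjI allI)
    fix p q
    show "T (p + q) = T p + T q"
    proof (rule Teq)
      have e: "(p + q) - (T p + T q) = (p - T p) + (q - T q)" by simp
      show "Dec lt V (p + q) (T p + T q)"
        unfolding Dec_def e using TD[of p] TD[of q] subsp_add[OF V] keys_add[of "T p" "T q"]
        by (auto simp: Dec_def)
    qed
  next
    fix c p
    show "T (scal c p) = scal c (T p)"
    proof (rule Teq)
      show "Dec lt V (scal c p) (scal c (T p))"
        unfolding Dec_def using TD[of p] subsp_scal[OF V] keys_scal[of c "T p"]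
        by (auto simp: Dec_def scal_diff[symmetric])
    qed
  next
    fix p
    show "T (T p) = T p"
      by (rule Teq) (use TD[of p] subsp_0[OF V] in \<open>simp add: Dec_def\<close>)
  next
    fix m
    show "T (mono m) = mono m \<or> (\<forall>m'\<in>Poly_Mapping.keys (T (mono m)). lt m' m)"
    proof (cases "m \<in> LMs lt V")
      case False
      have "T (mono m) = mono m"
        by (rule Teq) (use False subsp_0[OF V] in \<open>simp add: Dec_def mono_def\<close>)
      then show ?thesis by blast
    next
      case True
      let ?r = "T (mono m)"
      have rN: "Poly_Mapping.keys ?r \<subseteq> - LMs lt V" and wV: "mono m - ?r \<in> V"
        using TD[of "mono m"] by (auto simp: Dec_def)
      have "\<forall>m'\<in>Poly_Mapping.keys ?r. lt m' m"
      proof (rule ccontr)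
        assume "\<not> ?thesis"
        then obtain k where k: "k \<in> Poly_Mapping.keys ?r" "\<not> lt k m" by blast
        then have r0: "?r \<noteq> 0" by auto
        define L where "L = lm lt ?r"
        have L: "L \<in> Poly_Mapping.keys ?r" "\<And>k. k \<in> Poly_Mapping.keys ?r \<Longrightarrow> k \<noteq> L \<Longrightarrow> lt k L"
          using lm_prop[OF adm r0] by (auto simp: L_def)
        have "\<not> lt L m"
        proof
          assume "lt L m"
          then show False using k L(2)[of k] adm_trans[OF adm] by blast
        qed
        then have Lm: "L = m \<or> lt m L" using adm_total[OF adm, of L m] by blast
        have LN: "L \<notin> LMs lt V" using L(1) rN by blast
        show False
        proof (cases "L = m")
          case True then show False using LN \<open>m \<in> LMs lt V\<close> by simp
        next
          case False
          then have mL: "lt m L" using Lm by blast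
          let ?w = "mono m - ?r"
          have "Poly_Mapping.lookup ?w L \<noteq> 0"
            using False L(1) by (simp add: lookup_minus lookup_mono in_keys_iff)
          then have Lw: "L \<in> Poly_Mapping.keys ?w" by (simp add: in_keys_iff)
          have "lm lt ?w = L"
          proof (rule lm_eqI[OF adm Lw])
            fix k assume "k \<in> Poly_Mapping.keys ?w" "k \<noteq> L"
            then have "k = m \<or> k \<in> Poly_Mapping.keys ?r"
              using keys_diff[of "mono m" ?r] by (auto simp: mono_def split: if_splits)
            then show "lt k L" using mL L(2) \<open>k \<noteq> L\<close> by blast
          qed
          moreover have "?w \<noteq> 0" using Lw by auto
          ultimately have "L \<in> LMs lt V" using wV unfolding LMs_def by blast
          then show False using LN by blast
        qed
      qed
      then show ?thesis by blast
    qed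
  qed
  moreover have "ker T = V"
  proof (intro set_eqI iffI)
    fix p assume "p \<in> ker T"
    then show "p \<in> V" using TD[of p] by (simp add: ker_def Dec_def)
  next
    fix p assume "p \<in> V"
    then have "Dec lt V p 0" by (simp add: Dec_def)
    then show "p \<in> ker T" using Teq by (simp add: ker_def)
  qed
  ultimately show ?thesis by blast
qed

lemma red_op_of_props:
  assumes adm: "admissible_order lt" and V: "subsp V"
  shows "reduction_op lt (red_op_of lt V)" "ker (red_op_of lt V) = V"
    "nf (red_op_of lt V) = - LMs lt V"
proof -
  obtain T where T: "reduction_op lt T" "ker T = V" using red_exists[OF adm V] by blast
  have "red_op_of lt V = T" unfolding red_op_of_def
    by (rule the_equality) (use T red_unique[OF adm V] in blast)+
  then show "reduction_op lt (red_op_of lt V)" "ker (red_op_of lt V) = V"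
    "nf (red_op_of lt V) = - LMs lt V" using T nf_char[OF adm T(1)] by auto
qed


lemma keys_minus_single:
  assumes "k \<in> Poly_Mapping.keys (a - Poly_Mapping.single A (Poly_Mapping.lookup a A))"
  shows "k \<in> Poly_Mapping.keys a" "k \<noteq> A"
  using assms by (auto simp: lookup_minus lookup_single in_keys_iff when_def split: if_splits)

lemma lm_mult:
  fixes a b :: "('x, 'k::field) mpoly"
  assumes adm: "admissible_order lt" and a0: "a \<noteq> 0" and b0: "b \<noteq> 0"
  shows "a * b \<noteq> 0" "lm lt (a * b) = lm lt a + lm lt b"
proof -
  define A where "A = lm lt a"
  define B where "B = lm lt b"
  define \<alpha> where "\<alpha> = Poly_Mapping.lookup a A"
  define \<beta> where "\<beta> = Poly_Mapping.lookup b B"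
  have LA: "A \<in> Poly_Mapping.keys a" "\<And>k. k \<in> Poly_Mapping.keys a \<Longrightarrow> k \<noteq> A \<Longrightarrow> lt k A"
    using lm_prop[OF adm a0] by (auto simp: A_def)
  have LB: "B \<in> Poly_Mapping.keys b" "\<And>k. k \<in> Poly_Mapping.keys b \<Longrightarrow> k \<noteq> B \<Longrightarrow> lt k B"
    using lm_prop[OF adm b0] by (auto simp: B_def)
  have key_le: "lt (x + y) (A + B)" if xy: "x \<in> Poly_Mapping.keys a" "y \<in> Poly_Mapping.keys b" "x \<noteq> A \<or> y \<noteq> B" for x y
  proof (cases "x = A")
    case True
    then have "lt y B" using LB(2) xy by blast
    then show ?thesis using adm_mono2[OF adm, of y B A] True by simp
  next
    case False
    then have "lt x A" using LA(2) xy by blast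
    then have 1: "lt (x + y) (A + y)" by (rule adm_mono[OF adm])
    show ?thesis
    proof (cases "y = B")
      case True then show ?thesis using 1 by simp
    next
      case False
      then have "lt y B" using LB(2) xy by blast
      then have "lt (A + y) (A + B)" by (rule adm_mono2[OF adm])
      then show ?thesis using 1 adm_trans[OF adm] by blast
    qed
  qed
  define a' where "a' = a - Poly_Mapping.single A \<alpha>"
  define b' where "b' = b - Poly_Mapping.single B \<beta>"
  have eq: "a * b = Poly_Mapping.single (A + B) (\<alpha> * \<beta>) + Poly_Mapping.single A \<alpha> * b' + a' * b"
  proof -
    have ea: "a = Poly_Mapping.single A \<alpha> + a'" unfolding a'_def by (metis add.commute diff_add_cancel)
    have eb: "b = Poly_Mapping.single B \<beta> + b'" unfolding b'_def by (metis add.commute diff_add_cancel)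
    have "a * b = Poly_Mapping.single A \<alpha> * b + a' * b"
      by (subst ea) (rule distrib_right)
    also have "Poly_Mapping.single A \<alpha> * b = Poly_Mapping.single A \<alpha> * Poly_Mapping.single B \<beta> + Poly_Mapping.single A \<alpha> * b'"
      by (subst eb) (rule distrib_left)
    finally show ?thesis by (simp only: mult_single add.assoc)
  qed
  have X: "A + B \<notin> Poly_Mapping.keys (Poly_Mapping.single A \<alpha> * b')"
  proof
    assume "A + B \<in> Poly_Mapping.keys (Poly_Mapping.single A \<alpha> * b')"
    then have "A + B \<in> {x + y | x y. x \<in> Poly_Mapping.keys (Poly_Mapping.single A \<alpha>) \<and> y \<in> Poly_Mapping.keys b'}"
      by (rule subsetD[OF keys_mult])
    then obtain x y where "x \<in> Poly_Mapping.keys (Poly_Mapping.single A \<alpha>)" "y \<in> Poly_Mapping.keys b'" "A + B = x + y"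
      by blast
    note xy = this
    have "x = A" using xy(1) by (metis empty_iff keys_single singletonD)
    moreover have "y \<in> Poly_Mapping.keys b" "y \<noteq> B" using keys_minus_single[of y b B] xy(2) unfolding b'_def \<beta>_def by blast+
    ultimately have "lt (A + B) (A + B)" using key_le[of A y] LA(1) xy(3) by simp
    then show False using adm_irrefl[OF adm] by blast
  qed
  have Y: "A + B \<notin> Poly_Mapping.keys (a' * b)"
  proof
    assume "A + B \<in> Poly_Mapping.keys (a' * b)"
    then have "A + B \<in> {x + y | x y. x \<in> Poly_Mapping.keys a' \<and> y \<in> Poly_Mapping.keys b}"
      by (rule subsetD[OF keys_mult])
    then obtain x y where "x \<in> Poly_Mapping.keys a'" "y \<in> Poly_Mapping.keys b" "A + B = x + y"
      by blast
    note xy = this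
    have "x \<in> Poly_Mapping.keys a" "x \<noteq> A" using keys_minus_single[of x a A] xy(1) unfolding a'_def \<alpha>_def by blast+
    then have "lt (A + B) (A + B)" using key_le[of x y] xy(2,3) by simp
    then show False using adm_irrefl[OF adm] by blast
  qed
  have "Poly_Mapping.lookup (a * b) (A + B) = \<alpha> * \<beta>"
    using X Y unfolding eq by (simp add: lookup_add in_keys_iff)
  moreover have "\<alpha> * \<beta> \<noteq> 0" using LA(1) LB(1) by (simp add: \<alpha>_def \<beta>_def in_keys_iff)
  ultimately have ABk: "A + B \<in> Poly_Mapping.keys (a * b)" by (simp add: in_keys_iff)
  then show "a * b \<noteq> 0" by auto
  show "lm lt (a * b) = lm lt a + lm lt b"
    unfolding A_def[symmetric] B_def[symmetric]
  proof (rule lm_eqI[OF adm ABk])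
    fix k assume kk: "k \<in> Poly_Mapping.keys (a * b)" "k \<noteq> A + B"
    from kk(1) have "k \<in> {x + y | x y. x \<in> Poly_Mapping.keys a \<and> y \<in> Poly_Mapping.keys b}"
      by (rule subsetD[OF keys_mult])
    then obtain x y where "x \<in> Poly_Mapping.keys a" "y \<in> Poly_Mapping.keys b" "k = x + y"
      by blast
    then show "lt k (A + B)" using key_le[of x y] kk(2) by blast
  qed
qed

lemma lm_monom: assumes adm: "admissible_order lt" shows "lm lt (mono t :: ('x, 'k::field) mpoly) = t" "(mono t :: ('x, 'k::field) mpoly) \<noteq> 0"
proof -
  have k: "Poly_Mapping.keys (mono t :: ('x, 'k) mpoly) = {t}" by (simp add: mono_def)
  show "lm lt (mono t :: ('x, 'k::field) mpoly) = t" by (rule lm_eqI[OF adm]) (simp_all add: k)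
  show "(mono t :: ('x, 'k::field) mpoly) \<noteq> 0" using k by auto
qed

lemma ideal_gen_single: "ideal_gen {f} = range (\<lambda>q. q * f)"
proof (intro set_eqI iffI)
  fix p assume "p \<in> ideal_gen {f}"
  then have "\<exists>A q. finite A \<and> A \<subseteq> {f} \<and> p = (\<Sum>g\<in>A. q g * g)" unfolding ideal_gen_def by (rule CollectD)
  then obtain A q where Aq: "A \<subseteq> {f}" "p = (\<Sum>g\<in>A. q g * g)" by (elim exE conjE)
  have "A = {} \<or> A = {f}" using subset_singletonD[OF Aq(1)] .
  then show "p \<in> range (\<lambda>q. q * f)"
  proof
    assume "A = {}" then have "p = 0 * f" using Aq by simp
    then show ?thesis by (rule range_eqI)
  next
    assume "A = {f}" then have "p = q f * f" using Aq by simp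
    then show ?thesis by (rule range_eqI)
  qed
next
  fix p assume "p \<in> range (\<lambda>q. q * f)"
  then obtain q where q: "p = q * f" by (elim rangeE)
  have "finite {f} \<and> {f} \<subseteq> {f} \<and> p = (\<Sum>g\<in>{f}. (\<lambda>_. q) g * g)" using q by simp
  then have "\<exists>A q. finite A \<and> A \<subseteq> {f} \<and> p = (\<Sum>g\<in>A. q g * g)" by (intro exI)
  then show "p \<in> ideal_gen {f}" unfolding ideal_gen_def by (rule CollectI)
qed

lemma subsp_principal: "subsp (range (\<lambda>q. q * (f :: ('x, 'k::field) mpoly)))"
  unfolding subsp_def
proof (intro conjI ballI allI)
  show "0 \<in> range (\<lambda>q. q * f)" by (rule range_eqI[of _ _ 0]) simp
next
  fix p q assume "p \<in> range (\<lambda>q. q * f)" "q \<in> range (\<lambda>q. q * f)"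
  then obtain u v where "p = u * f" "q = v * f" by blast
  then have "p + q = (u + v) * f" by (simp add: distrib_right)
  then show "p + q \<in> range (\<lambda>q. q * f)" by blast
next
  fix c p assume "p \<in> range (\<lambda>q. q * f)"
  then obtain u where "p = u * f" by blast
  then have "scal c p = (Poly_Mapping.single 0 c * u) * f" by (simp add: scal_def mult.assoc)
  then show "scal c p \<in> range (\<lambda>q. q * f)" by blast
qed

lemma LMs_principal:
  fixes f :: "('x, 'k::field) mpoly"
  assumes adm: "admissible_order lt" and f0: "f \<noteq> 0"
  shows "LMs lt (range (\<lambda>q. q * f)) = {m. mdvd (lm lt f) m}"
proof (intro set_eqI iffI)
  fix m assume "m \<in> LMs lt (range (\<lambda>q. q * f))"
  then obtain q where q: "q * f \<noteq> 0" "lm lt (q * f) = m" by (auto simp: LMs_def)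
  then have "q \<noteq> 0" by auto
  then have "m = lm lt q + lm lt f" using lm_mult(2)[OF adm _ f0, of q] q(2) by simp
  then have "m = lm lt f + lm lt q" by (simp only: add.commute)
  then show "m \<in> {m. mdvd (lm lt f) m}" by (auto simp: mdvd_def)
next
  fix m assume "m \<in> {m. mdvd (lm lt f) m}"
  then obtain t where t: "m = lm lt f + t" by (auto simp: mdvd_def)
  have nz: "mono t * f \<noteq> 0" using lm_mult(1)[OF adm lm_monom(2)[OF adm] f0] .
  have "lm lt (mono t * f) = t + lm lt f"
    using lm_mult(2)[OF adm lm_monom(2)[OF adm] f0] lm_monom(1)[OF adm, of t] by simp
  then have "lm lt (mono t * f) = m" using t by (simp only: add.commute)
  then show "m \<in> LMs lt (range (\<lambda>q. q * f))" using nz unfolding LMs_def by blast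
qed

lemma ideal_subsp: assumes "is_ideal I" shows "subsp I"
  unfolding subsp_def
proof (intro conjI ballI allI)
  show "0 \<in> I" using assms unfolding is_ideal_def by blast
  show "p + q \<in> I" if "p \<in> I" "q \<in> I" for p q using assms that unfolding is_ideal_def by blast
  show "scal c p \<in> I" if "p \<in> I" for c p
  proof -
    have "\<forall>r. r * p \<in> I" using assms that unfolding is_ideal_def by blast
    then show ?thesis unfolding scal_def by blast
  qed
qed

lemma ideal_sum: assumes "is_ideal I" "\<And>x. x \<in> A \<Longrightarrow> g x \<in> I" shows "sum g A \<in> I"
  using assms(2)
proof (induction A rule: infinite_finite_induct)
  case (infinite A) then show ?case using assms(1) by (simp add: is_ideal_def)
next
  case empty then show ?case using assms(1) by (simp add: is_ideal_def)
next
  case (insert x F) then show ?case using assms(1) by (simp add: is_ideal_def)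
qed


theorem mainTheorem9:
  fixes lt :: "'x monom \<Rightarrow> 'x monom \<Rightarrow> bool"
    and I R :: "('x, 'k::field) mpoly set"
  assumes "admissible_order lt"
    and "is_ideal I"
    and "finite R"
    and "0 \<notin> R"
    and "I = ideal_gen R"
  shows "groebner_basis lt R I \<longleftrightarrow> confluent lt (F_R lt R)"
proof -
  note adm = assms(1)
  define TT where "TT f = red_op_of lt (ideal_gen {f})" for f :: "('x, 'k) mpoly"
  have subsp1: "subsp (ideal_gen {f})" for f :: "('x, 'k) mpoly"
    unfolding ideal_gen_single by (rule subsp_principal)
  have TTred: "reduction_op lt (TT f)" and TTker: "ker (TT f) = ideal_gen {f}"
    and TTnf: "nf (TT f) = - LMs lt (ideal_gen {f})" for f
    using red_op_of_props[OF adm subsp1] unfolding TT_def by auto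
  have F: "F_R lt R = TT ` R" unfolding F_R_def TT_def by simp
  have RI: "f \<in> I" if "f \<in> R" for f
  proof -
    have "finite {f} \<and> {f} \<subseteq> R \<and> f = (\<Sum>g\<in>{f}. (\<lambda>_. 1) g * g)" using that by simp
    then have "\<exists>A q. finite A \<and> A \<subseteq> R \<and> f = (\<Sum>g\<in>A. q g * g)" by (intro exI)
    then show ?thesis unfolding assms(5) ideal_gen_def by (rule CollectI)
  qed
  have Imul: "\<forall>p\<in>I. \<forall>r. r * p \<in> I" using assms(2) unfolding is_ideal_def by (elim conjE)
  have mulI: "q * f \<in> I" if "f \<in> R" for f q
    using Imul RI[OF that] by blast
  have SK: "sum_kernels (F_R lt R) = I"
  proof (intro set_eqI iffI)
    fix p assume "p \<in> sum_kernels (F_R lt R)"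
    then obtain v where v: "\<forall>T\<in>TT ` R. v T \<in> ker T" "p = (\<Sum>T\<in>TT ` R. v T)"
      unfolding sum_kernels_def F by blast
    have "v T \<in> I" if "T \<in> TT ` R" for T
    proof -
      obtain f where f: "T = TT f" "f \<in> R" using \<open>T \<in> TT ` R\<close> by (elim imageE)
      have "v T \<in> ker T" using v(1) that by blast
      then have "v T \<in> range (\<lambda>q. q * f)" using TTker[of f] ideal_gen_single[of f] f(1) by simp
      then obtain q where "v T = q * f" by (elim rangeE)
      then show ?thesis using mulI[OF f(2), of q] by simp
    qed
    then show "p \<in> I" using ideal_sum[OF assms(2)] v(2) by metis
  next
    fix p assume "p \<in> I"
    then obtain A q where Aq: "finite A" "A \<subseteq> R" "p = (\<Sum>g\<in>A. q g * g)"
      unfolding assms(5) ideal_gen_def by blast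
    let ?S = "sum_kernels (TT ` R)"
    have fin: "finite (TT ` R)" using assms(3) by simp
    have S0: "0 \<in> ?S" unfolding sum_kernels_def
      by (rule CollectI, rule exI[of _ "\<lambda>_. 0"]) (auto simp: ker_def red_zero[OF TTred])
    have Sadd: "x + y \<in> ?S" if xS: "x \<in> ?S" and yS: "y \<in> ?S" for x y
    proof -
      obtain v where v: "\<forall>T\<in>TT ` R. v T \<in> ker T" "x = (\<Sum>T\<in>TT ` R. v T)"
        using xS unfolding sum_kernels_def by blast
      obtain w where w: "\<forall>T\<in>TT ` R. w T \<in> ker T" "y = (\<Sum>T\<in>TT ` R. w T)"
        using yS unfolding sum_kernels_def by blast
      have "\<forall>T\<in>TT ` R. v T + w T \<in> ker T" using v(1) w(1) by (auto simp: ker_def red_add[OF TTred])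
      moreover have "x + y = (\<Sum>T\<in>TT ` R. v T + w T)" using v(2) w(2) by (simp add: sum.distrib)
      ultimately show ?thesis unfolding sum_kernels_def by (intro CollectI exI[of _ "\<lambda>T. v T + w T"] conjI)
    qed
    have Sgen: "q * g \<in> ?S" if "g \<in> R" for q g
    proof -
      define v where "v T = (if T = TT g then q * g else 0)" for T
      have "\<forall>T\<in>TT ` R. v T \<in> ker T"
      proof
        fix T assume "T \<in> TT ` R"
        show "v T \<in> ker T"
        proof (cases "T = TT g")
          case True
          then show ?thesis using TTker[of g] ideal_gen_single[of g] by (auto simp: v_def)
        next
          case False
          then show ?thesis using \<open>T \<in> TT ` R\<close> by (auto simp: v_def ker_def red_zero[OF TTred])
        qed
      qed
      moreover have "q * g = (\<Sum>T\<in>TT ` R. v T)"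
        using that fin by (simp add: v_def sum.delta')
      ultimately show ?thesis unfolding sum_kernels_def by (intro CollectI exI[of _ v] conjI)
    qed
    have "(\<Sum>g\<in>A. q g * g) \<in> ?S" using Aq(1,2)
    proof (induction A rule: finite_induct)
      case empty then show ?case using S0 by simp
    next
      case (insert x F) then show ?case using Sadd Sgen by simp
    qed
    then show "p \<in> sum_kernels (F_R lt R)" using Aq(3) F by simp
  qed
  have nfW: "nf (wedge lt (F_R lt R)) = - LMs lt I"
    unfolding wedge_def SK using red_op_of_props(3)[OF adm ideal_subsp[OF assms(2)]] .
  define D where "D = {m. \<exists>f\<in>R. mdvd (lm lt f) m}"
  have nfT: "nf (TT f) = - {m. mdvd (lm lt f) m}" if "f \<in> R" for f
  proof -
    have "f \<noteq> 0" using that assms(4) by blast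
    then show ?thesis using TTnf[of f] LMs_principal[OF adm, of f] ideal_gen_single[of f] by simp
  qed
  have INT: "(\<Inter>T\<in>F_R lt R. nf T) = - D"
    unfolding F D_def using nfT by auto
  have DI: "D \<subseteq> LMs lt I"
  proof
    fix m assume "m \<in> D"
    then obtain f where f: "f \<in> R" "mdvd (lm lt f) m" by (auto simp: D_def)
    have "f \<noteq> 0" using f(1) assms(4) by blast
    then have "m \<in> LMs lt (range (\<lambda>q. q * f))" using LMs_principal[OF adm, of f] f(2) by simp
    then obtain v where v: "v \<in> range (\<lambda>q. q * f)" "v \<noteq> 0" "lm lt v = m"
      unfolding LMs_def by blast
    from v(1) obtain q where "v = q * f" by (elim rangeE)
    then have "v \<in> I" using mulI[OF f(1), of q] by simp
    then show "m \<in> LMs lt I" using v(2,3) unfolding LMs_def by blast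
  qed
  have "confluent lt (F_R lt R) \<longleftrightarrow> - D = - LMs lt I"
    unfolding confluent_def INT nfW ..
  also have "\<dots> \<longleftrightarrow> D = LMs lt I" by (rule compl_eq_compl_iff)
  also have "\<dots> \<longleftrightarrow> LMs lt I \<subseteq> D"
  proof
    assume "D = LMs lt I" then show "LMs lt I \<subseteq> D" by simp
  next
    assume "LMs lt I \<subseteq> D" then show "D = LMs lt I" by (rule subset_antisym[OF DI])
  qed
  finally have conf: "confluent lt (F_R lt R) \<longleftrightarrow> LMs lt I \<subseteq> D" .
  have "groebner_basis lt R I \<longleftrightarrow> LMs lt I \<subseteq> D"
  proof
    assume G: "groebner_basis lt R I"
    show "LMs lt I \<subseteq> D"
    proof
      fix m assume "m \<in> LMs lt I"
      then obtain h where h: "h \<in> I" "h \<noteq> 0" "lm lt h = m" unfolding LMs_def by blast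
      then obtain g where "g \<in> R" "mdvd (lm lt g) (lm lt h)"
        using G unfolding groebner_basis_def by blast
      then show "m \<in> D" using h(3) unfolding D_def by blast
    qed
  next
    assume L: "LMs lt I \<subseteq> D"
    have "R \<subseteq> I" using RI by blast
    moreover have "\<exists>g\<in>R. g \<noteq> 0 \<and> mdvd (lm lt g) (lm lt f)" if "f \<in> I" "f \<noteq> 0" for f
    proof -
      have "lm lt f \<in> LMs lt I" using that unfolding LMs_def by blast
      then have "lm lt f \<in> D" using L by (rule subsetD[rotated])
      then obtain g where g: "g \<in> R" "mdvd (lm lt g) (lm lt f)" unfolding D_def by blast
      then have "g \<noteq> 0" using assms(4) by metis
      then show ?thesis using g by blast
    qed
    ultimately show "groebner_basis lt R I" unfolding groebner_basis_def by blast
  qed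
  then show ?thesis using conf by simp
qed

end
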